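(* (i) Let $(p,q)$ satisfy $\frac2p+\frac1q=1$, $1\le q<\infty$, and let $\beta>\frac{2q}{q+1}$. Then there is no constant $C$ such that for all $N\ge1$, all $\lambda\in\ell^\beta$ and all orthonormal systems $(f_j)$ in $L^2(\mathbf T)$ one has $\|\sum_j\lambda_j|\mathscr D_Nf_j|^2\|_{L^p_tL^q_x(\mathbf T\times\mathbf T)}\le CN^{1/p}\|\lambda\|_{\ell^\beta}$. (ii) Let $\beta>2$. Then there is no constant $C$ such that for all $N\ge1$, all $\lambda\in\ell^\beta$ and all orthonormal systems $(f_j)$ in $L^2(\mathbf T)$ one has $\|\sum_j\lambda_j|\mathscr D_Nf_j|^2\|_{L^2_tL^\infty_x(\mathbf T\times\mathbf T)}\le CN^{1/2}\|\lambda\|_{\ell^\beta}$.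
   Context: $\mathbf T=[0,2\pi)$, $S_N=\mathbb Z\cap[-N,N]$, $\mathscr F_xf(k)=\frac1{2\pi}\int_{\mathbf T}e^{-ixk}f(x)\,dx$, and $\mathscr D_Nf(t,x)=\frac1{2\pi}\sum_{n\in S_N}\mathscr F_xf(n)e^{i(xn+t\sqrt{n^2+n^4})}$. *)

theory Defs
  imports "HOL-Analysis.Analysis" "HOL-Probability.Essential_Supremum"
begin

definition torus :: "real set" where
  "torus = {0..<2*pi}"

definition Tmeas :: "real measure" where
  "Tmeas = lebesgue_on torus"

definition fourier_coeff :: "(real \<Rightarrow> complex) \<Rightarrow> int \<Rightarrow> complex" where
  "fourier_coeff f k = complex_of_real (1 / (2*pi)) *
     integral\<^sup>L Tmeas (\<lambda>x. exp (- \<i> * complex_of_real (x * real_of_int k)) * f x)"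

definition DN :: "nat \<Rightarrow> (real \<Rightarrow> complex) \<Rightarrow> real \<Rightarrow> real \<Rightarrow> complex" where
  "DN N f t x = complex_of_real (1 / (2*pi)) *
     (\<Sum>n\<in>{- int N..int N}. fourier_coeff f n *
        exp (\<i> * complex_of_real (x * real_of_int n
               + t * sqrt ((real_of_int n)^2 + (real_of_int n)^4))))"

definition ennpow :: "ennreal \<Rightarrow> real \<Rightarrow> ennreal" where
  "ennpow a r = (if a = \<infinity> then \<infinity> else ennreal (enn2real a powr r))"

definition Lpnorm :: "ereal \<Rightarrow> (real \<Rightarrow> ennreal) \<Rightarrow> ennreal" where
  "Lpnorm p g = (if p = \<infinity> then esssup Tmeas g
      else ennpow (\<integral>\<^sup>+ x. ennpow (g x) (real_of_ereal p) \<partial>Tmeas) (1 / real_of_ereal p))"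

definition mixed_norm :: "ereal \<Rightarrow> ereal \<Rightarrow> (real \<Rightarrow> real \<Rightarrow> complex) \<Rightarrow> ennreal" where
  "mixed_norm p q F = Lpnorm p (\<lambda>t. Lpnorm q (\<lambda>x. ennreal (cmod (F t x))))"

definition orthonormal_system :: "(nat \<Rightarrow> real \<Rightarrow> complex) \<Rightarrow> bool" where
  "orthonormal_system f \<longleftrightarrow>
     (\<forall>j. f j \<in> borel_measurable Tmeas \<and> integrable Tmeas (\<lambda>x. (cmod (f j x))^2)) \<and>
     (\<forall>j k. integral\<^sup>L Tmeas (\<lambda>x. f j x * cnj (f k x)) = (if j = k then 1 else 0))"

definition in_lbeta :: "real \<Rightarrow> (nat \<Rightarrow> complex) \<Rightarrow> bool" where
  "in_lbeta \<beta> lam \<longleftrightarrow> summable (\<lambda>j. cmod (lam j) powr \<beta>)"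

definition lbeta_norm :: "real \<Rightarrow> (nat \<Rightarrow> complex) \<Rightarrow> real" where
  "lbeta_norm \<beta> lam = (\<Sum>j. cmod (lam j) powr \<beta>) powr (1 / \<beta>)"

definition density :: "nat \<Rightarrow> (nat \<Rightarrow> complex) \<Rightarrow> (nat \<Rightarrow> real \<Rightarrow> complex) \<Rightarrow> real \<Rightarrow> real \<Rightarrow> complex" where
  "density N lam f t x = (\<Sum>j. lam j * complex_of_real ((cmod (DN N (f j) t x))^2))"

definition pow_inv :: "nat \<Rightarrow> ereal \<Rightarrow> real" where
  "pow_inv N p = (if p = \<infinity> then 1 else real N powr (1 / real_of_ereal p))"

end

theory Submission
  imports Defs "HOL-Real_Asymp.Real_Asymp"
begin

lemma torus_sets[simp]: "torus \<in> sets lebesgue" by (simp add: torus_def)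

lemma space_Tmeas[simp]: "space Tmeas = torus" by (simp add: Tmeas_def)
lemma emeasure_Tmeas: "emeasure Tmeas (space Tmeas) = ennreal (2*pi)"
proof -
  have "emeasure Tmeas torus = emeasure lebesgue torus"
    unfolding Tmeas_def by (simp add: emeasure_restrict_space)
  also have "\<dots> = emeasure lborel {0..<2*pi}" unfolding torus_def
    by (simp add: emeasure_completion)
  also have "\<dots> = ennreal (2*pi)" by (simp add: emeasure_lborel_Ico)
  finally show ?thesis by simp
qed

lemma exp_integrable:
  "integrable Tmeas (\<lambda>x. c * exp (\<i> * complex_of_real (x * a)))"
proof -
  have fm: "finite_measure Tmeas"
    by (rule finite_measureI) (use emeasure_Tmeas in simp)
  show ?thesis
  proof (rule finite_measure.integrable_const_bound[OF fm, where B="cmod c"])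
    show "AE x in Tmeas. norm (c * exp (\<i> * complex_of_real (x * a))) \<le> cmod c"
      by (simp add: norm_mult)
    show "(\<lambda>x. c * exp (\<i> * complex_of_real (x * a))) \<in> borel_measurable Tmeas"
      unfolding Tmeas_def
      by (intro continuous_imp_measurable_on_sets_lebesgue continuous_intros) auto
  qed
qed

lemma exp_int_integral:
  fixes m :: int
  shows "integral\<^sup>L Tmeas (\<lambda>x. exp (\<i> * complex_of_real (x * real_of_int m))) = (if m = 0 then 2*pi else 0)"
proof -
  let ?f = "\<lambda>x. exp (\<i> * complex_of_real (x * real_of_int m))"
  have "(?f has_integral integral\<^sup>L Tmeas ?f) torus"
    unfolding Tmeas_def using exp_integrable[of 1 "real_of_int m"]
    by (intro has_integral_integral_lebesgue_on) (auto simp: Tmeas_def)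
  then have h1: "(?f has_integral integral\<^sup>L Tmeas ?f) {0..2*pi}"
    unfolding torus_def
    by (rule has_integral_spike_set_eq[THEN iffD1, rotated -1])
       (auto intro: negligible_subset[of "{2*pi}"])
  have h2: "(?f has_integral (if m = 0 then 2*pi else 0)) {0..2*pi}"
  proof (cases "m = 0")
    case True
    have "((\<lambda>x. 1::complex) has_integral (2*pi) *\<^sub>R 1) {0..2*pi}"
      using has_integral_const_real[of "1::complex" 0 "2*pi"] by simp
    then show ?thesis using True by (simp add: scaleR_conv_of_real)
  next
    case False
    let ?F = "\<lambda>x::real. exp (\<i> * complex_of_real (x * real_of_int m)) / (\<i> * of_int m)"
    have d: "(?F has_vector_derivative ?f x) (at x within {0..2*pi})" for x
    proof -
      have "((\<lambda>z. exp (\<i> * of_int m * z) / (\<i> * of_int m)) has_field_derivative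
             exp (\<i> * of_int m * of_real x)) (at (of_real x))"
        using False by (auto intro!: derivative_eq_intros)
      from has_vector_derivative_real_field[OF this] show ?thesis
        by (simp add: mult_ac)
    qed
    have "(?f has_integral (?F (2*pi) - ?F 0)) {0..2*pi}"
      by (rule fundamental_theorem_of_calculus) (use d in auto)
    moreover have "?F (2*pi) = ?F 0"
    proof -
      have "exp (\<i> * complex_of_real (2*pi * real_of_int m)) = 1"
        using exp_integer_2pi[of "of_int m"]
        by (simp add: mult_ac)
      then show ?thesis by simp
    qed
    ultimately show ?thesis using False by simp
  qed
  show ?thesis using h1 h2 has_integral_unique by blast
qed

definition fs :: "nat \<Rightarrow> real \<Rightarrow> complex" where
  "fs j x = complex_of_real (1 / sqrt (2*pi)) * exp (\<i> * complex_of_real (x * real j))"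

lemma fs_prod: "fs j x * cnj (fs k x) =
   complex_of_real (1/(2*pi)) * exp (\<i> * complex_of_real (x * real_of_int (int j - int k)))"
proof -
  have "cnj (exp (\<i> * complex_of_real (x * real k))) = exp (- (\<i> * complex_of_real (x * real k)))"
    by (simp add: exp_cnj)
  moreover have "exp (\<i> * complex_of_real (x * real j)) * exp (- (\<i> * complex_of_real (x * real k)))
      = exp (\<i> * complex_of_real (x * real_of_int (int j - int k)))"
    by (simp add: exp_add[symmetric] algebra_simps)
  moreover have "complex_of_real (1 / sqrt (2*pi)) * complex_of_real (1 / sqrt (2*pi)) = complex_of_real (1/(2*pi))"
    by (simp flip: of_real_mult)
  ultimately show ?thesis unfolding fs_def by (simp add: mult_ac)
qed

lemma fs_orth: "orthonormal_system fs"
  unfolding orthonormal_system_def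
proof (intro conjI allI)
  fix j
  show "fs j \<in> borel_measurable Tmeas"
    unfolding Tmeas_def fs_def
    by (intro continuous_imp_measurable_on_sets_lebesgue continuous_intros) auto
  have fm: "finite_measure Tmeas"
    by (rule finite_measureI) (use emeasure_Tmeas in simp)
  have "cmod (fs j x) = 1 / sqrt (2*pi)" for x
    unfolding fs_def norm_mult norm_exp_i_times norm_of_real by simp
  then have "(\<lambda>x. (cmod (fs j x))^2) = (\<lambda>x. 1/(2*pi))"
    by (simp add: power_divide)
  then show "integrable Tmeas (\<lambda>x. (cmod (fs j x))^2)"
    using finite_measure.integrable_const[OF fm] by simp
next
  fix j k
  show "integral\<^sup>L Tmeas (\<lambda>x. fs j x * cnj (fs k x)) = (if j = k then 1 else 0)"
    unfolding fs_prod integral_mult_right_zero exp_int_integral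
    by simp
qed

lemma fc_fs: "fourier_coeff (fs j) n = (if n = int j then complex_of_real (1 / sqrt (2*pi)) else 0)"
proof -
  have "(\<lambda>x. exp (- \<i> * complex_of_real (x * real_of_int n)) * fs j x) =
        (\<lambda>x. complex_of_real (1 / sqrt (2*pi)) * exp (\<i> * complex_of_real (x * real_of_int (int j - n))))"
    by (rule ext) (simp add: fs_def exp_add[symmetric] algebra_simps)
  note eq = this
  show ?thesis
    unfolding fourier_coeff_def eq integral_mult_right_zero exp_int_integral
    by simp
qed

lemma DN_fs:
  assumes "j \<le> N"
  shows "(cmod (DN N (fs j) t x))^2 = 1 / (8*pi^3)"
proof -
  let ?E = "\<lambda>n::int. exp (\<i> * complex_of_real (x * real_of_int n
               + t * sqrt ((real_of_int n)^2 + (real_of_int n)^4)))"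
  have "DN N (fs j) t x = complex_of_real (1 / (2*pi)) *
     (\<Sum>n\<in>{- int N..int N}. fourier_coeff (fs j) n * ?E n)"
    by (simp only: DN_def)
  also have "(\<Sum>n\<in>{- int N..int N}. fourier_coeff (fs j) n * ?E n) =
     (\<Sum>n\<in>{- int N..int N}. (if n = int j then complex_of_real (1 / sqrt (2*pi)) * ?E n else 0))"
    by (rule sum.cong) (auto simp: fc_fs)
  also have "\<dots> = complex_of_real (1 / sqrt (2*pi)) * ?E (int j)"
    using assms by (subst sum.delta) auto
  finally have eq: "DN N (fs j) t x = complex_of_real (1 / (2*pi)) * (complex_of_real (1 / sqrt (2*pi)) * ?E (int j))" .
  have "cmod (DN N (fs j) t x) = (1/(2*pi)) * (1 / sqrt (2*pi))"
    unfolding eq norm_mult norm_exp_i_times norm_of_real by simp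
  then have "(cmod (DN N (fs j) t x))^2 = (1/(2*pi))^2 * (1 / sqrt (2*pi))^2"
    by (simp add: power_mult_distrib power_divide)
  also have "\<dots> = 1 / (8*pi^3)"
    by (simp add: power_divide power2_eq_square field_simps eval_nat_numeral)
  finally show ?thesis .
qed

definition lamN :: "nat \<Rightarrow> nat \<Rightarrow> complex" where
  "lamN N j = (if j \<le> N then 1 else 0)"

lemma density_fs: "density N (lamN N) fs t x = complex_of_real (real (N+1) / (8*pi^3))"
proof -
  have "density N (lamN N) fs t x = (\<Sum>j\<in>{..N}. lamN N j * complex_of_real ((cmod (DN N (fs j) t x))^2))"
    unfolding density_def by (rule suminf_finite) (auto simp: lamN_def)
  also have "\<dots> = (\<Sum>j\<in>{..N}. complex_of_real (1 / (8*pi^3)))"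
    by (rule sum.cong) (auto simp: lamN_def DN_fs)
  finally show ?thesis by simp
qed

lemma lamN_lbeta:
  assumes "\<beta> > 0"
  shows "in_lbeta \<beta> (lamN N)" "lbeta_norm \<beta> (lamN N) = real (N+1) powr (1/\<beta>)"
proof -
  have s: "(\<Sum>j. cmod (lamN N j) powr \<beta>) = (\<Sum>j\<in>{..N}. cmod (lamN N j) powr \<beta>)"
    by (rule suminf_finite) (auto simp: lamN_def)
  show "in_lbeta \<beta> (lamN N)" unfolding in_lbeta_def
    by (rule summable_finite[of "{..N}"]) (auto simp: lamN_def)
  have "(\<Sum>j\<in>{..N}. cmod (lamN N j) powr \<beta>) = real (N+1)"
    by (simp add: lamN_def)
  then show "lbeta_norm \<beta> (lamN N) = real (N+1) powr (1/\<beta>)"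
    unfolding lbeta_norm_def s by simp
qed


definition ppow :: "ereal \<Rightarrow> real" where
  "ppow p = (if p = \<infinity> then 1 else (2*pi) powr (1 / real_of_ereal p))"

lemma ppow_pos: "ppow p > 0" by (simp add: ppow_def)

lemma Lpnorm_const:
  assumes r: "r \<ge> 0" and p: "p = \<infinity> \<or> (\<exists>s. p = ereal s \<and> s > 0)"
  shows "Lpnorm p (\<lambda>_. ennreal r) = ennreal (ppow p * r)"
  using p
proof
  assume "p = \<infinity>"
  have "emeasure Tmeas (space Tmeas) \<noteq> 0" using emeasure_Tmeas by simp
  with \<open>p = \<infinity>\<close> show ?thesis unfolding Lpnorm_def ppow_def
    by (simp add: esssup_const)
next
  assume "\<exists>s. p = ereal s \<and> s > 0"
  then obtain s where s: "p = ereal s" "s > 0" by blast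
  have "(\<integral>\<^sup>+ x. ennpow (ennreal r) s \<partial>Tmeas) = ennreal (r powr s * (2*pi))"
    using r emeasure_Tmeas by (simp add: ennpow_def ennreal_mult'')
  moreover have "(r powr s * (2*pi)) powr (1/s) = (2*pi) powr (1/s) * r"
    using r s by (simp add: powr_mult powr_powr)
  ultimately show ?thesis using s r unfolding Lpnorm_def ppow_def
    by (simp add: ennpow_def)
qed

lemma mixed_const:
  assumes "c \<ge> 0"
    and p: "p = \<infinity> \<or> (\<exists>s. p = ereal s \<and> s > 0)"
    and q: "q = \<infinity> \<or> (\<exists>s. q = ereal s \<and> s > 0)"
  shows "mixed_norm p q (\<lambda>t x. complex_of_real c) = ennreal (ppow p * (ppow q * c))"
  unfolding mixed_norm_def using assms
  by (simp add: Lpnorm_const ppow_pos less_imp_le)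

lemma density_const: "density N (lamN N) fs = (\<lambda>t x. complex_of_real (real (N+1) / (8*pi^3)))"
  by (intro ext) (simp add: density_fs)

lemma grow:
  fixes K a b C :: real
  assumes K: "K > 0" and a: "a \<ge> 0" and b: "b > 0" and ab: "a + b < 1"
  shows "\<exists>N::nat. N \<ge> 1 \<and> C * real N powr a * real (N+1) powr b < K * real (N+1)"
proof -
  have "eventually (\<lambda>N::nat. C / K < real (N+1) powr (1 - a - b)) sequentially"
    using ab by real_asymp
  then obtain M where M: "\<And>N. N \<ge> M \<Longrightarrow> C / K < real (N+1) powr (1 - a - b)"
    unfolding eventually_sequentially by blast
  define N where "N = max 1 M"
  have N1: "N \<ge> 1" and NM: "N \<ge> M" by (auto simp: N_def)
  have hN: "C / K < real (N+1) powr (1 - a - b)" using M NM by blast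
  have "C * real N powr a * real (N+1) powr b < K * real (N+1)"
  proof (cases "C \<le> 0")
    case True
    then have "C * real N powr a * real (N+1) powr b \<le> 0"
      by (simp add: mult_nonpos_nonneg)
    also have "0 < K * real (N+1)" using K by simp
    finally show ?thesis .
  next
    case False
    have "real N powr a \<le> real (N+1) powr a" using a by (intro powr_mono2) auto
    then have "C * real N powr a * real (N+1) powr b \<le> C * real (N+1) powr a * real (N+1) powr b"
      using False by (intro mult_right_mono mult_left_mono) auto
    also have "\<dots> = C * real (N+1) powr (a + b)" by (simp add: powr_add)
    also have "\<dots> < K * real (N+1) powr (1 - a - b) * real (N+1) powr (a + b)"
    proof -
      have "C < K * real (N+1) powr (1 - a - b)" using hN K by (simp add: divide_less_eq mult.commute)
      then show ?thesis by (intro mult_strict_right_mono) auto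
    qed
    also have "\<dots> = K * real (N+1)"
      by (simp add: mult.assoc powr_add[symmetric])
    finally show ?thesis .
  qed
  then show ?thesis using N1 by blast
qed


lemma main_gen:
  assumes p: "p = \<infinity> \<or> (\<exists>s. p = ereal s \<and> s > 0)"
    and q: "q = \<infinity> \<or> (\<exists>s. q = ereal s \<and> s > 0)"
    and \<beta>: "\<beta> > 0"
    and a: "a \<ge> 0" and ab: "a + 1/\<beta> < 1"
    and pw: "\<And>N. N \<ge> 1 \<Longrightarrow> P N = real N powr a"
  shows "\<not> (\<exists>C::real. \<forall>N::nat. N \<ge> 1 \<longrightarrow>
                 (\<forall>lam f. in_lbeta \<beta> lam \<longrightarrow> orthonormal_system f \<longrightarrow>
                    mixed_norm p q (density N lam f)
                      \<le> ennreal (C * P N * lbeta_norm \<beta> lam)))"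
proof
  assume "\<exists>C::real. \<forall>N::nat. N \<ge> 1 \<longrightarrow>
                 (\<forall>lam f. in_lbeta \<beta> lam \<longrightarrow> orthonormal_system f \<longrightarrow>
                    mixed_norm p q (density N lam f)
                      \<le> ennreal (C * P N * lbeta_norm \<beta> lam))"
  then obtain C where C: "\<And>N lam f. N \<ge> 1 \<Longrightarrow> in_lbeta \<beta> lam \<Longrightarrow> orthonormal_system f \<Longrightarrow>
                    mixed_norm p q (density N lam f) \<le> ennreal (C * P N * lbeta_norm \<beta> lam)"
    by blast
  define K where "K = ppow p * ppow q / (8*pi^3)"
  have K: "K > 0" unfolding K_def using ppow_pos[of p] ppow_pos[of q] by simp
  obtain N :: nat where N: "N \<ge> 1" and lt: "C * real N powr a * real (N+1) powr (1/\<beta>) < K * real (N+1)"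
    using grow[OF K a _ ab, of C] \<beta> by auto
  have "mixed_norm p q (density N (lamN N) fs) \<le> ennreal (C * P N * lbeta_norm \<beta> (lamN N))"
    using C[OF N lamN_lbeta(1)[OF \<beta>] fs_orth] .
  also have "mixed_norm p q (density N (lamN N) fs) = ennreal (K * real (N+1))"
    unfolding density_const K_def using p q
    by (subst mixed_const) (auto simp: field_simps)
  also have "C * P N * lbeta_norm \<beta> (lamN N) = C * real N powr a * real (N+1) powr (1/\<beta>)"
    using pw[OF N] lamN_lbeta(2)[OF \<beta>] by simp
  finally have "ennreal (K * real (N+1)) \<le> ennreal (C * real N powr a * real (N+1) powr (1/\<beta>))" .
  moreover have "ennreal (C * real N powr a * real (N+1) powr (1/\<beta>)) < ennreal (K * real (N+1))"
    using lt K by (intro ennreal_lessI) auto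
  ultimately show False by simp
qed

theorem theorem1p7:
  shows "(\<forall>(p::ereal) (q::real) (\<beta>::real).
            1 \<le> q \<and>
            ((p = \<infinity> \<and> q = 1) \<or> (\<exists>p0. p = ereal p0 \<and> p0 > 0 \<and> 2 / p0 + 1 / q = 1)) \<and>
            \<beta> > 2 * q / (q + 1) \<longrightarrow>
            \<not> (\<exists>C::real. \<forall>N::nat. N \<ge> 1 \<longrightarrow>
                 (\<forall>lam f. in_lbeta \<beta> lam \<longrightarrow> orthonormal_system f \<longrightarrow>
                    mixed_norm p (ereal q) (density N lam f)
                      \<le> ennreal (C * pow_inv N p * lbeta_norm \<beta> lam))))
       \<and>
         (\<forall>\<beta>::real. \<beta> > 2 \<longrightarrow>
            \<not> (\<exists>C::real. \<forall>N::nat. N \<ge> 1 \<longrightarrow>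
                 (\<forall>lam f. in_lbeta \<beta> lam \<longrightarrow> orthonormal_system f \<longrightarrow>
                    mixed_norm 2 \<infinity> (density N lam f)
                      \<le> ennreal (C * real N powr (1/2) * lbeta_norm \<beta> lam))))"
proof (intro conjI allI impI)
  fix \<beta> :: real assume b: "\<beta> > 2"
  have "1/\<beta> < 1/2" using b by (simp add: divide_strict_left_mono)
  then have ab: "1/2 + 1/\<beta> < 1" by linarith
  show "\<not> (\<exists>C::real. \<forall>N::nat. N \<ge> 1 \<longrightarrow>
                 (\<forall>lam f. in_lbeta \<beta> lam \<longrightarrow> orthonormal_system f \<longrightarrow>
                    mixed_norm 2 \<infinity> (density N lam f)
                      \<le> ennreal (C * real N powr (1/2) * lbeta_norm \<beta> lam)))"
    using b ab by (intro main_gen[where a="1/2"]) (auto intro!: exI[of _ 2])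
next
  fix p :: ereal and q \<beta> :: real
  assume H: "1 \<le> q \<and>
            ((p = \<infinity> \<and> q = 1) \<or> (\<exists>p0. p = ereal p0 \<and> p0 > 0 \<and> 2 / p0 + 1 / q = 1)) \<and>
            \<beta> > 2 * q / (q + 1)"
  then have q1: "1 \<le> q" and bq: "\<beta> > 2 * q / (q + 1)" by auto
  have bpos: "\<beta> > 0" using q1 bq by (smt (verit) divide_pos_pos)
  have binv: "1/\<beta> < (q+1)/(2*q)"
  proof -
    have "1/\<beta> < 1 / (2 * q / (q + 1))"
    proof (rule divide_strict_left_mono)
      show "2 * q / (q + 1) < \<beta>" by (rule bq)
      have "2 * q / (q + 1) > 0" using q1 by simp
      then show "0 < \<beta> * (2 * q / (q + 1))" using bpos mult_pos_pos by blast
    qed simp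
    then show ?thesis by simp
  qed
  have qq: "ereal q = \<infinity> \<or> (\<exists>s. ereal q = ereal s \<and> s > 0)" using q1 by auto
  from H consider "p = \<infinity>" "q = 1" | p0 where "p = ereal p0" "p0 > 0" "2 / p0 + 1 / q = 1"
    by blast
  then show "\<not> (\<exists>C::real. \<forall>N::nat. N \<ge> 1 \<longrightarrow>
                 (\<forall>lam f. in_lbeta \<beta> lam \<longrightarrow> orthonormal_system f \<longrightarrow>
                    mixed_norm p (ereal q) (density N lam f)
                      \<le> ennreal (C * pow_inv N p * lbeta_norm \<beta> lam)))"
  proof cases
    case 1
    show ?thesis
      using 1 binv bpos qq
      by (intro main_gen[where a=0]) (auto simp: pow_inv_def)
  next
    case 2
    have "1/p0 = (1 - 1/q)/2" using 2 by (simp add: field_simps)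
    moreover have "(q+1)/(2*q) = 1/2 + (1/q)/2" using q1 by (simp add: field_simps)
    moreover have "(1 - 1/q)/2 = 1/2 - (1/q)/2" by (simp add: field_simps)
    ultimately have "1/p0 + 1/\<beta> < 1" using binv by linarith
    then show ?thesis
      using 2 bpos qq
      by (intro main_gen[where a="1/p0"]) (auto simp: pow_inv_def)
  qed
qed

end
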